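(* Let $h>0$ and let $f:C([-h,0],\mathbb{R}_+)\to\mathbb{R}_+$ be a continuous functional which maps closed bounded sets into bounded subsets of $\mathbb{R}_+$. Consider $x'(t)=-x(t)+f(x_t)$, $x\ge0$, and assume that every nonnegative solution admits a unique extension to the whole right semi-axis. Suppose $f(0)=0$ and $f(K)=K$ for some $K>0$ (here $0$ and $K$ denote constant functions), and that the constant solution $x\equiv K$ attracts every solution with nonnegative, not identically zero initial function. Then there exists a positive solution $\psi:\mathbb{R}\to(0,\infty)$ of this equation defined for all $t\in\mathbb{R}$ such that $\psi(-\infty)=0$ and $\psi(+\infty)=K$.
   Context: $C([-h,0],\mathbb{R}_+)$ carries the sup norm $|\phi|=\max_{s\in[-h,0]}|\phi(s)|$, and $x_t\in C([-h,0],\mathbb{R}_+)$ is defined by $x_t(s)=x(t+s)$. *)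

theory Defs
  imports "HOL-Analysis.Analysis"
begin

text \<open>Elements of C([-h,0],R_+) are represented canonically as functions real => real
  that are continuous and nonnegative on [-h,0] and vanish outside [-h,0].\<close>
definition Cplus :: "real \<Rightarrow> (real \<Rightarrow> real) set" where
  "Cplus h = {\<phi>. continuous_on {-h..0} \<phi> \<and> (\<forall>s\<in>{-h..0}. 0 \<le> \<phi> s)
                 \<and> (\<forall>s. s \<notin> {-h..0} \<longrightarrow> \<phi> s = 0)}"

definition seg :: "real \<Rightarrow> (real \<Rightarrow> real) \<Rightarrow> real \<Rightarrow> (real \<Rightarrow> real)" where
  "seg h x t = (\<lambda>s. if s \<in> {-h..0} then x (t + s) else 0)"

definition supn :: "real \<Rightarrow> (real \<Rightarrow> real) \<Rightarrow> real" where
  "supn h \<phi> = (SUP s\<in>{-h..0}. \<bar>\<phi> s\<bar>)"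

definition fcont :: "real \<Rightarrow> ((real \<Rightarrow> real) \<Rightarrow> real) \<Rightarrow> bool" where
  "fcont h f \<longleftrightarrow> (\<forall>\<phi>\<in>Cplus h. \<forall>e>0. \<exists>d>0. \<forall>\<psi>\<in>Cplus h.
      supn h (\<lambda>s. \<psi> s - \<phi> s) < d \<longrightarrow> \<bar>f \<psi> - f \<phi>\<bar> < e)"

definition C_closed :: "real \<Rightarrow> (real \<Rightarrow> real) set \<Rightarrow> bool" where
  "C_closed h B \<longleftrightarrow> (\<forall>\<phi> \<in> Cplus h. \<forall>u :: nat \<Rightarrow> (real \<Rightarrow> real).
      (\<forall>n. u n \<in> B) \<and> (\<lambda>n. supn h (\<lambda>s. u n s - \<phi> s)) \<longlonglongrightarrow> 0 \<longrightarrow> \<phi> \<in> B)"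

definition C_bounded :: "real \<Rightarrow> (real \<Rightarrow> real) set \<Rightarrow> bool" where
  "C_bounded h B \<longleftrightarrow> (\<exists>M. \<forall>\<phi>\<in>B. supn h \<phi> \<le> M)"

definition maps_cb_to_bounded :: "real \<Rightarrow> ((real \<Rightarrow> real) \<Rightarrow> real) \<Rightarrow> bool" where
  "maps_cb_to_bounded h f \<longleftrightarrow> (\<forall>B. B \<subseteq> Cplus h \<and> C_closed h B \<and> C_bounded h B
      \<longrightarrow> bounded (f ` B))"

text \<open>Nonnegative solution on [-h,T] (initial time 0; equation is autonomous).\<close>
definition sol_on :: "real \<Rightarrow> ((real \<Rightarrow> real) \<Rightarrow> real) \<Rightarrow> real \<Rightarrow> (real \<Rightarrow> real) \<Rightarrow> bool" where
  "sol_on h f T x \<longleftrightarrow> continuous_on {-h..T} x \<and> (\<forall>s\<in>{-h..T}. 0 \<le> x s)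
      \<and> (\<forall>t\<in>{0<..<T}. (x has_real_derivative (- x t + f (seg h x t))) (at t))"

definition gsol :: "real \<Rightarrow> ((real \<Rightarrow> real) \<Rightarrow> real) \<Rightarrow> (real \<Rightarrow> real) \<Rightarrow> bool" where
  "gsol h f x \<longleftrightarrow> continuous_on {-h..} x \<and> (\<forall>s\<in>{-h..}. 0 \<le> x s)
      \<and> (\<forall>t\<in>{0<..}. (x has_real_derivative (- x t + f (seg h x t))) (at t))"

end

theory Submission
  imports Defs "HOL-Complex_Analysis.Great_Picard"
begin


lemma supn_le:
  assumes "h > 0" "\<And>s. s \<in> {-h..0} \<Longrightarrow> \<bar>\<phi> s\<bar> \<le> c"
  shows "supn h \<phi> \<le> c"
  unfolding supn_def using assms by (intro cSUP_least) auto

lemma supn_ge: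
  assumes "continuous_on {-h..0} \<phi>" "s \<in> {-h..0}"
  shows "\<bar>\<phi> s\<bar> \<le> supn h \<phi>"
proof -
  have "continuous_on {-h..0} (\<lambda>s. \<bar>\<phi> s\<bar>)"
    using assms(1) by (rule continuous_on_rabs)
  then have "compact ((\<lambda>s. \<bar>\<phi> s\<bar>) ` {-h..0})"
    by (rule compact_continuous_image) simp
  then have "bdd_above ((\<lambda>s. \<bar>\<phi> s\<bar>) ` {-h..0})"
    by (intro bounded_imp_bdd_above compact_imp_bounded)
  then show ?thesis unfolding supn_def by (rule cSUP_upper[OF assms(2)])
qed

lemma seg_Cplus:
  assumes "continuous_on {t-h..t} g" "\<And>s. s \<in> {t-h..t} \<Longrightarrow> 0 \<le> g s"
  shows "seg h g t \<in> Cplus h"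
proof -
  have "continuous_on {-h..0} (\<lambda>s. g (t + s))"
  proof (rule continuous_on_compose2[OF assms(1)])
    show "continuous_on {-h..0} (\<lambda>s. t + s)" by (intro continuous_intros)
    show "(\<lambda>s. t + s) ` {-h..0} \<subseteq> {t-h..t}" by auto
  qed
  then have "continuous_on {-h..0} (seg h g t)"
    by (rule continuous_on_eq) (simp add: seg_def)
  moreover have "\<forall>s\<in>{-h..0}. 0 \<le> seg h g t s" using assms(2) by (auto simp: seg_def)
  moreover have "\<forall>s. s \<notin> {-h..0} \<longrightarrow> seg h g t s = 0" by (simp add: seg_def)
  ultimately show ?thesis unfolding Cplus_def by blast
qed
lemma fbound:
  assumes hpos: "h > 0" and fbdd: "maps_cb_to_bounded h f"
  shows "\<exists>F. \<forall>\<phi>\<in>Cplus h. supn h \<phi> \<le> M \<longrightarrow> \<bar>f \<phi>\<bar> \<le> F"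
proof -
  define B where "B = {\<phi>\<in>Cplus h. supn h \<phi> \<le> M}"
  have "C_closed h B"
    unfolding C_closed_def
  proof (intro ballI allI impI)
    fix \<phi> and u :: "nat \<Rightarrow> real \<Rightarrow> real"
    assume \<phi>: "\<phi> \<in> Cplus h" and u: "(\<forall>n. u n \<in> B) \<and> (\<lambda>n. supn h (\<lambda>s. u n s - \<phi> s)) \<longlonglongrightarrow> 0"
    have uB: "u n \<in> Cplus h" "supn h (u n) \<le> M" for n
      using u unfolding B_def by blast+
    have lim: "(\<lambda>n. supn h (\<lambda>s. u n s - \<phi> s)) \<longlonglongrightarrow> 0" using u by blast
    have c\<phi>: "continuous_on {-h..0} \<phi>" using \<phi> unfolding Cplus_def by blast
    have "\<bar>\<phi> s\<bar> \<le> M" if s: "s \<in> {-h..0}" for s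
    proof -
      have le: "\<bar>\<phi> s\<bar> \<le> M + supn h (\<lambda>s. u n s - \<phi> s)" for n
      proof -
        have cu: "continuous_on {-h..0} (u n)"
          using uB(1)[of n] unfolding Cplus_def by blast
        have 1: "\<bar>u n s\<bar> \<le> supn h (u n)" by (rule supn_ge[OF cu s])
        have "continuous_on {-h..0} (\<lambda>s. u n s - \<phi> s)"
          by (rule continuous_on_diff[OF cu c\<phi>])
        then have 2: "\<bar>u n s - \<phi> s\<bar> \<le> supn h (\<lambda>s. u n s - \<phi> s)"
          by (rule supn_ge[OF _ s])
        show ?thesis using 1 2 uB(2)[of n] by linarith
      qed
      have "(\<lambda>n. M + supn h (\<lambda>s. u n s - \<phi> s)) \<longlonglongrightarrow> M + 0"
        by (rule tendsto_add[OF tendsto_const lim])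
      then have "(\<lambda>n. M + supn h (\<lambda>s. u n s - \<phi> s)) \<longlonglongrightarrow> M" by simp
      then show ?thesis by (rule LIMSEQ_le_const) (use le in blast)
    qed
    then have "supn h \<phi> \<le> M" by (rule supn_le[OF hpos])
    then show "\<phi> \<in> B" using \<phi> unfolding B_def by blast
  qed
  moreover have "C_bounded h B" unfolding C_bounded_def B_def by blast
  moreover have "B \<subseteq> Cplus h" unfolding B_def by blast
  ultimately have "bounded (f ` B)" using fbdd unfolding maps_cb_to_bounded_def by blast
  then obtain F where F: "\<forall>x\<in>f ` B. norm x \<le> F" unfolding bounded_iff by blast
  show ?thesis
  proof (intro exI[of _ F] ballI impI)
    fix \<phi> assume "\<phi> \<in> Cplus h" "supn h \<phi> \<le> M"
    then have "\<phi> \<in> B" unfolding B_def by blast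
    then show "\<bar>f \<phi>\<bar> \<le> F" using F by auto
  qed
qed

lemma pos_forward:
  fixes g g' :: "real \<Rightarrow> real"
  assumes "a \<le> b" "continuous_on {a..b} g"
    "\<And>t. a < t \<Longrightarrow> t < b \<Longrightarrow> (g has_real_derivative g' t) (at t)"
    "\<And>t. a < t \<Longrightarrow> t < b \<Longrightarrow> g' t \<ge> - g t" "g a > 0"
  shows "g b > 0"
proof -
  have "exp a * g a \<le> exp b * g b"
  proof (rule DERIV_nonneg_imp_increasing_open[OF assms(1)])
    fix x assume x: "a < x" "x < b"
    have "((\<lambda>t. exp t * g t) has_real_derivative (exp x * g x + exp x * g' x)) (at x)"
      by (auto intro!: derivative_eq_intros assms(3) x)
    moreover have "exp x * g x + exp x * g' x \<ge> 0"
      using assms(4)[OF x] by (simp add: add_nonneg_nonneg flip: distrib_left)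
    ultimately show "\<exists>y. ((\<lambda>t. exp t * g t) has_real_derivative y) (at x) \<and> 0 \<le> y" by blast
  next
    show "continuous_on {a..b} (\<lambda>t. exp t * g t)" by (intro continuous_intros assms)
  qed
  moreover have "exp a * g a > 0" using assms(5) by simp
  ultimately have "exp b * g b > 0" by linarith
  then show ?thesis by (simp add: zero_less_mult_iff)
qed

lemma lip_mvt:
  fixes g :: "real \<Rightarrow> real"
  assumes "continuous_on {a..b} g"
    "\<And>t. a < t \<Longrightarrow> t < b \<Longrightarrow> (g has_real_derivative D t) (at t)"
    "\<And>t. a < t \<Longrightarrow> t < b \<Longrightarrow> \<bar>D t\<bar> \<le> L"
    "p \<in> {a..b}" "q \<in> {a..b}"
  shows "\<bar>g p - g q\<bar> \<le> L * \<bar>p - q\<bar>"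
proof -
  have *: "\<bar>g y - g x\<bar> \<le> L * (y - x)" if "x \<in> {a..b}" "y \<in> {a..b}" "x < y" for x y
  proof -
    have "continuous_on {x..y} g" by (rule continuous_on_subset[OF assms(1)]) (use that in auto)
    moreover have "g differentiable (at t)" if "x < t" "t < y" for t
      using assms(2)[of t] that \<open>x \<in> {a..b}\<close> \<open>y \<in> {a..b}\<close> real_differentiable_def by auto
    ultimately obtain l z where z: "x < z" "z < y" "(g has_real_derivative l) (at z)" "g y - g x = (y - x) * l"
      using MVT[OF \<open>x < y\<close>] by blast
    have "l = D z" using z(3) assms(2)[of z] that z by (auto intro: DERIV_unique)
    then have "\<bar>l\<bar> \<le> L" using assms(3)[of z] that z by auto
    then show ?thesis using z(4) that by (simp add: abs_mult mult.commute mult_right_mono)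
  qed
  show ?thesis
  proof (cases p q rule: linorder_cases)
    case less then show ?thesis using *[of p q] assms by (simp add: abs_minus_commute)
  next
    case greater then show ?thesis using *[of q p] assms by simp
  qed simp
qed



lemma lim_extract:
  fixes z :: "nat \<Rightarrow> real \<Rightarrow> real"
  assumes bnd: "\<And>n t. 0 \<le> z n t \<and> z n t \<le> M"
    and lip: "\<And>n s t. \<bar>z n s - z n t\<bar> \<le> L * \<bar>s - t\<bar>"
  obtains r w where "strict_mono r" "\<And>t. (\<lambda>n. z (r n) t) \<longlonglongrightarrow> w t"
    "\<And>a b e. e > 0 \<Longrightarrow> \<exists>N. \<forall>n\<ge>N. \<forall>t\<in>{a..b}. \<bar>z (r n) t - w t\<bar> < e"
proof -
  define K where "K i = {-real i..real i}" for i :: nat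
  have AA: "\<exists>k g. strict_mono (k::nat\<Rightarrow>nat) \<and> (\<forall>e>0. \<exists>N. \<forall>n\<ge>N. \<forall>x\<in>K i. \<bar>(z \<circ> (r \<circ> k)) n x - g x\<bar> < e)"
    for i and r :: "nat \<Rightarrow> nat"
  proof -
    have c: "compact (K i)" by (simp add: K_def)
    have b: "\<And>n x. x \<in> K i \<Longrightarrow> norm ((z \<circ> r) n x) \<le> M"
      using bnd by (simp add: o_def)
    have e: "\<exists>d. 0 < d \<and> (\<forall>n y. y \<in> K i \<and> norm (x - y) < d \<longrightarrow> norm ((z \<circ> r) n x - (z \<circ> r) n y) < e)"
      if "x \<in> K i" "0 < e" for x e
    proof (intro exI[of _ "e / (\<bar>L\<bar> + 1)"] conjI allI impI)
      show "0 < e / (\<bar>L\<bar> + 1)" using that by simp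
      fix n y assume y: "y \<in> K i \<and> norm (x - y) < e / (\<bar>L\<bar> + 1)"
      have "\<bar>z (r n) x - z (r n) y\<bar> \<le> L * \<bar>x - y\<bar>" by (rule lip)
      also have "\<dots> \<le> \<bar>L\<bar> * \<bar>x - y\<bar>" by (simp add: mult_right_mono)
      also have "\<dots> \<le> \<bar>L\<bar> * (e / (\<bar>L\<bar> + 1))" using y by (intro mult_left_mono) auto
      also have "\<dots> < e"
      proof -
        have "\<bar>L\<bar> * (e / (\<bar>L\<bar> + 1)) = e * (\<bar>L\<bar> / (\<bar>L\<bar> + 1))" by simp
        also have "\<dots> < e * 1" using that(2) by (intro mult_strict_left_mono) auto
        finally show ?thesis by simp
      qed
      finally show "norm ((z \<circ> r) n x - (z \<circ> r) n y) < e" by simp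
    qed
    obtain g k where "continuous_on (K i) g" "strict_mono (k::nat\<Rightarrow>nat)"
      "\<And>e. 0 < e \<Longrightarrow> \<exists>N. \<forall>n x. n \<ge> N \<and> x \<in> K i \<longrightarrow> norm ((z \<circ> r) (k n) x - g x) < e"
      by (rule Arzela_Ascoli[OF c b e]) auto
    then show ?thesis
      by (intro exI[of _ k] exI[of _ g]) (fastforce simp: o_def)
  qed
  define \<Phi> where "\<Phi> \<equiv> \<lambda>g i r. \<lambda>k::nat\<Rightarrow>nat. \<forall>e>0. \<exists>N. \<forall>n\<ge>N. \<forall>x\<in>K i. \<bar>(z \<circ> (r \<circ> k)) n x - g x\<bar> < e"
  obtain k :: "nat \<Rightarrow> nat" where "strict_mono k" and k: "\<And>i. \<exists>g. \<Phi> g i id k"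
  proof (rule subsequence_diagonalization_lemma [where r=id])
    show "\<exists>g. \<Phi> g i id (r \<circ> k2)"
      if ex: "\<exists>g. \<Phi> g i id (r \<circ> k1)" and "\<And>j. N \<le> j \<Longrightarrow> \<exists>j'\<ge>j. k2 j = k1 j'"
      for i k1 k2 N and r::"nat\<Rightarrow>nat"
    proof -
      obtain g where "\<Phi> g i id (r \<circ> k1)"
        using ex by blast
      then have "\<Phi> g i id (r \<circ> k2)"
        using that
        by (simp add: \<Phi>_def) (metis (no_types, opaque_lifting) le_trans linear)
      then show ?thesis
        by metis
    qed
    have "\<exists>k g. strict_mono (k::nat\<Rightarrow>nat) \<and> \<Phi> g i id (r \<circ> k)" for i r
      unfolding \<Phi>_def o_assoc using AA[of i r] by (simp add: o_def)
    then show "\<And>i r. \<exists>k. strict_mono (k::nat\<Rightarrow>nat) \<and> (\<exists>g. \<Phi> g i id (r \<circ> k))"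
      by force
  qed fastforce
  obtain G where G: "\<And>i. \<Phi> (G i) i id k" using k by metis
  have Gu: "\<exists>N. \<forall>n\<ge>N. \<forall>x\<in>K i. \<bar>z (k n) x - G i x\<bar> < e" if "e > 0" for i e
    using G[of i] that unfolding \<Phi>_def by simp
  have Gl: "(\<lambda>n. z (k n) x) \<longlonglongrightarrow> G i x" if "x \<in> K i" for i x
  proof (rule LIMSEQ_I)
    fix e :: real assume "e > 0"
    then obtain N where "\<forall>n\<ge>N. \<forall>x\<in>K i. \<bar>z (k n) x - G i x\<bar> < e" using Gu by blast
    then show "\<exists>N. \<forall>n\<ge>N. norm (z (k n) x - G i x) < e" using that by auto
  qed
  define w where "w t = G (nat \<lceil>\<bar>t\<bar>\<rceil>) t" for t
  have inK: "t \<in> K (nat \<lceil>\<bar>t\<bar>\<rceil>)" for t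
    unfolding K_def by (auto simp: abs_le_iff[symmetric]) linarith+
  have wl: "(\<lambda>n. z (k n) t) \<longlonglongrightarrow> w t" for t
    unfolding w_def by (rule Gl[OF inK])
  have Gw: "G i x = w x" if "x \<in> K i" for i x
    using LIMSEQ_unique[OF Gl[OF that] wl] .
  show ?thesis
  proof (rule that[OF \<open>strict_mono k\<close> wl])
    fix a b e :: real assume "e > 0"
    define i where "i = nat \<lceil>max \<bar>a\<bar> \<bar>b\<bar>\<rceil>"
    have sub: "{a..b} \<subseteq> K i" unfolding K_def i_def by (auto simp: abs_le_iff[symmetric]) linarith+
    obtain N where N: "\<forall>n\<ge>N. \<forall>x\<in>K i. \<bar>z (k n) x - G i x\<bar> < e" using Gu \<open>e > 0\<close> by blast
    show "\<exists>N. \<forall>n\<ge>N. \<forall>t\<in>{a..b}. \<bar>z (k n) t - w t\<bar> < e"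
    proof (intro exI[of _ N] allI impI ballI)
      fix n t assume "n \<ge> N" "t \<in> {a..b}"
      then show "\<bar>z (k n) t - w t\<bar> < e" using N sub Gw by fastforce
    qed
  qed
qed



lemma lip_cont:
  fixes g :: "real \<Rightarrow> real"
  assumes "\<And>s t. \<bar>g s - g t\<bar> \<le> L * \<bar>s - t\<bar>"
  shows "continuous_on A g"
  unfolding continuous_on_iff
proof (intro ballI allI impI)
  fix x e :: real assume "0 < e"
  show "\<exists>d>0. \<forall>x'\<in>A. dist x' x < d \<longrightarrow> dist (g x') (g x) < e"
  proof (intro exI[of _ "e / (\<bar>L\<bar> + 1)"] conjI ballI impI)
    show "0 < e / (\<bar>L\<bar> + 1)" using \<open>0 < e\<close> by simp
    fix y assume y: "dist y x < e / (\<bar>L\<bar> + 1)"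
    have "\<bar>g y - g x\<bar> \<le> L * \<bar>y - x\<bar>" by (rule assms)
    also have "\<dots> \<le> \<bar>L\<bar> * \<bar>y - x\<bar>" by (simp add: mult_right_mono)
    also have "\<dots> \<le> \<bar>L\<bar> * (e / (\<bar>L\<bar> + 1))" using y by (intro mult_left_mono) (auto simp: dist_real_def)
    also have "\<dots> < e"
    proof -
      have "\<bar>L\<bar> * (e / (\<bar>L\<bar> + 1)) = e * (\<bar>L\<bar> / (\<bar>L\<bar> + 1))" by simp
      also have "\<dots> < e * 1" using \<open>0 < e\<close> by (intro mult_strict_left_mono) auto
      finally show ?thesis by simp
    qed
    finally show "dist (g y) (g x) < e" by (simp add: dist_real_def)
  qed
qed

lemma lip_segC:
  fixes g :: "real \<Rightarrow> real"
  assumes "\<And>s t. \<bar>g s - g t\<bar> \<le> L * \<bar>s - t\<bar>" "\<And>t. 0 \<le> g t"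
  shows "seg h g t \<in> Cplus h"
  by (rule seg_Cplus) (use lip_cont[OF assms(1)] assms(2) in auto)

lemma seg_diff_le:
  assumes "h > 0" "\<And>y. y \<in> {t-h..t} \<Longrightarrow> \<bar>g1 y - g2 y\<bar> \<le> c"
  shows "supn h (\<lambda>s. seg h g1 t s - seg h g2 t s) \<le> c"
proof (rule supn_le[OF assms(1)])
  fix s assume "s \<in> {-h..0}"
  then have "t + s \<in> {t-h..t}" by auto
  with assms(2)[of "t+s"] \<open>s \<in> {-h..0}\<close> show "\<bar>seg h g1 t s - seg h g2 t s\<bar> \<le> c"
    by (simp add: seg_def)
qed

lemma seg_shift_le:
  assumes "h > 0" "\<And>s t. \<bar>g s - g t\<bar> \<le> L * \<bar>s - t\<bar>"
  shows "supn h (\<lambda>s. seg h g r s - seg h g t s) \<le> \<bar>L\<bar> * \<bar>r - t\<bar>"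
proof (rule supn_le[OF assms(1)])
  fix s assume "s \<in> {-h..0}"
  have "\<bar>g (r + s) - g (t + s)\<bar> \<le> L * \<bar>(r + s) - (t + s)\<bar>" by (rule assms(2))
  also have "\<dots> \<le> \<bar>L\<bar> * \<bar>r - t\<bar>" by (simp add: mult_right_mono)
  finally show "\<bar>seg h g r s - seg h g t s\<bar> \<le> \<bar>L\<bar> * \<bar>r - t\<bar>"
    using \<open>s \<in> {-h..0}\<close> by (simp add: seg_def)
qed

lemma seg_bound:
  assumes "h > 0" "\<And>t. 0 \<le> g t \<and> g t \<le> M"
  shows "supn h (seg h g t) \<le> M"
  by (rule supn_le[OF assms(1)]) (use assms(2) in \<open>auto simp: seg_def\<close>)

lemma fcontD:
  assumes "fcont h f" "\<phi> \<in> Cplus h" "e > 0"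
  shows "\<exists>d>0. \<forall>\<psi>\<in>Cplus h. supn h (\<lambda>s. \<psi> s - \<phi> s) < d \<longrightarrow> \<bar>f \<psi> - f \<phi>\<bar> < e"
  using assms unfolding fcont_def by blast

lemma sol_limit:
  fixes z :: "nat \<Rightarrow> real \<Rightarrow> real" and w :: "real \<Rightarrow> real"
  assumes hpos: "h > 0" and fc: "fcont h f"
    and FB: "\<forall>\<phi>\<in>Cplus h. supn h \<phi> \<le> M \<longrightarrow> \<bar>f \<phi>\<bar> \<le> F"
    and bnd: "\<And>n t. 0 \<le> z n t \<and> z n t \<le> M"
    and lip: "\<And>n s t. \<bar>z n s - z n t\<bar> \<le> L * \<bar>s - t\<bar>"
    and wbnd: "\<And>t. 0 \<le> w t \<and> w t \<le> M"
    and wlip: "\<And>s t. \<bar>w s - w t\<bar> \<le> L * \<bar>s - t\<bar>"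
    and unif: "\<And>a b e. e > 0 \<Longrightarrow> \<exists>N. \<forall>n\<ge>N. \<forall>t\<in>{a..b}. \<bar>z n t - w t\<bar> < e"
    and ev: "\<exists>N. \<forall>n\<ge>N. \<forall>t\<in>{a<..<b}. (z n has_real_derivative (- z n t + f (seg h (z n) t))) (at t)"
    and t0: "t0 \<in> {a<..<b}"
  shows "(w has_real_derivative (- w t0 + f (seg h w t0))) (at t0)"
proof -
  define G where "G r = - w r + f (seg h w r)" for r
  define Gn where "Gn n r = - z n r + f (seg h (z n) r)" for n r
  have wC: "seg h w r \<in> Cplus h" for r using lip_segC[OF wlip] wbnd by blast
  have zC: "seg h (z n) r \<in> Cplus h" for n r using lip_segC[OF lip] bnd by blast
  have contG: "continuous_on A G" for A
    unfolding continuous_on_iff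
  proof (intro ballI allI impI)
    fix x e :: real assume "0 < e"
    then have "e/2 > 0" by simp
    obtain d where d: "d > 0" "\<forall>\<psi>\<in>Cplus h. supn h (\<lambda>s. \<psi> s - seg h w x s) < d \<longrightarrow> \<bar>f \<psi> - f (seg h w x)\<bar> < e/2"
      using fcontD[OF fc wC \<open>e/2 > 0\<close>] by blast
    define dd where "dd = min d e / (2 * (\<bar>L\<bar> + 1))"
    have dd: "dd > 0" using d \<open>e > 0\<close> by (simp add: dd_def)
    show "\<exists>d>0. \<forall>x'\<in>A. dist x' x < d \<longrightarrow> dist (G x') (G x) < e"
    proof (intro exI[of _ dd] conjI ballI impI dd)
      fix y assume "dist y x < dd"
      then have yx: "\<bar>y - x\<bar> < dd" by (simp add: dist_real_def)
      have key: "\<bar>L\<bar> * \<bar>y - x\<bar> < min d e / 2"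
      proof -
        have "\<bar>L\<bar> * \<bar>y - x\<bar> \<le> \<bar>L\<bar> * dd" using yx by (intro mult_left_mono) auto
        also have "\<dots> = (min d e / 2) * (\<bar>L\<bar> / (\<bar>L\<bar> + 1))" by (simp add: dd_def)
        also have "\<dots> < (min d e / 2) * 1" using d \<open>e > 0\<close> by (intro mult_strict_left_mono) auto
        finally show ?thesis by simp
      qed
      have md: "min d e / 2 < d" "min d e / 2 \<le> e/2" using d \<open>e > 0\<close> by auto
      have "supn h (\<lambda>s. seg h w y s - seg h w x s) \<le> \<bar>L\<bar> * \<bar>y - x\<bar>"
        by (rule seg_shift_le[OF hpos wlip])
      then have "supn h (\<lambda>s. seg h w y s - seg h w x s) < d" using key md by linarith
      then have 1: "\<bar>f (seg h w y) - f (seg h w x)\<bar> < e/2" using d(2) wC by blast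
      have "\<bar>w y - w x\<bar> \<le> L * \<bar>y - x\<bar>" by (rule wlip)
      also have "\<dots> \<le> \<bar>L\<bar> * \<bar>y - x\<bar>" by (simp add: mult_right_mono)
      finally have 2: "\<bar>w y - w x\<bar> < e/2" using key md by linarith
      show "dist (G y) (G x) < e" using 1 2 unfolding G_def dist_real_def by linarith
    qed
  qed
  have conv: "(\<lambda>n. Gn n r) \<longlonglongrightarrow> G r" for r
  proof -
    have zl: "(\<lambda>n. z n r) \<longlonglongrightarrow> w r"
    proof (rule LIMSEQ_I)
      fix e :: real assume "e > 0"
      then obtain N where "\<forall>n\<ge>N. \<forall>t\<in>{r..r}. \<bar>z n t - w t\<bar> < e" using unif by blast
      then show "\<exists>N. \<forall>n\<ge>N. norm (z n r - w r) < e" by auto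
    qed
    have fl: "(\<lambda>n. f (seg h (z n) r)) \<longlonglongrightarrow> f (seg h w r)"
    proof (rule LIMSEQ_I)
      fix e :: real assume "e > 0"
      obtain d where d: "d > 0" "\<forall>\<psi>\<in>Cplus h. supn h (\<lambda>s. \<psi> s - seg h w r s) < d \<longrightarrow> \<bar>f \<psi> - f (seg h w r)\<bar> < e"
        using fcontD[OF fc wC \<open>e > 0\<close>] by blast
      obtain N where N: "\<forall>n\<ge>N. \<forall>t\<in>{r-h..r}. \<bar>z n t - w t\<bar> < d/2" using unif[of "d/2" "r-h" r] d by auto
      show "\<exists>N. \<forall>n\<ge>N. norm (f (seg h (z n) r) - f (seg h w r)) < e"
      proof (intro exI[of _ N] allI impI)
        fix n assume "n \<ge> N"
        have "supn h (\<lambda>s. seg h (z n) r s - seg h w r s) \<le> d/2"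
          by (rule seg_diff_le[OF hpos]) (use N \<open>n \<ge> N\<close> in \<open>auto intro: less_imp_le\<close>)
        then have "supn h (\<lambda>s. seg h (z n) r s - seg h w r s) < d" using d by linarith
        then show "norm (f (seg h (z n) r) - f (seg h w r)) < e" using d(2) zC by auto
      qed
    qed
    show ?thesis unfolding Gn_def G_def by (intro tendsto_intros zl fl)
  qed
  have Gnb: "norm (Gn n r) \<le> M + F" for n r
  proof -
    have "\<bar>f (seg h (z n) r)\<bar> \<le> F"
      using FB zC[of n r] seg_bound[OF hpos, of "z n" M r] bnd by blast
    then show ?thesis using bnd[of n r] unfolding Gn_def real_norm_def by (auto simp: abs_le_iff)
  qed
  obtain N where N: "\<forall>n\<ge>N. \<forall>t\<in>{a<..<b}. (z n has_real_derivative Gn n t) (at t)"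
    using ev unfolding Gn_def by blast
  obtain s1 b1 where sb: "a < s1" "s1 < t0" "t0 < b1" "b1 < b"
    using t0 by (metis dense greaterThanLessThan_iff)
  have ident: "w u - w s1 = integral {s1..u} G" if u: "u \<in> {s1..b1}" for u
  proof -
    have hi: "(Gn (n + N) has_integral (z (n + N) u - z (n + N) s1)) {s1..u}" for n
    proof (rule fundamental_theorem_of_calculus)
      show "s1 \<le> u" using u by auto
      fix x assume x: "x \<in> {s1..u}"
      then have "x \<in> {a<..<b}" using u sb by auto
      then have "(z (n + N) has_real_derivative Gn (n + N) x) (at x)" using N by auto
      then have "(z (n + N) has_real_derivative Gn (n + N) x) (at x within {s1..u})"
        by (rule has_field_derivative_at_within)
      then show "(z (n + N) has_vector_derivative Gn (n + N) x) (at x within {s1..u})"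
        by (simp add: has_real_derivative_iff_has_vector_derivative)
    qed
    have dc: "(\<lambda>n. integral {s1..u} (Gn (n + N))) \<longlonglongrightarrow> integral {s1..u} G"
    proof (rule dominated_convergence(2))
      show "Gn (n + N) integrable_on {s1..u}" for n using hi by blast
      show "(\<lambda>x. M + F) integrable_on {s1..u}" by blast
      show "norm (Gn (n + N) x) \<le> M + F" for n x by (rule Gnb)
      show "(\<lambda>n. Gn (n + N) x) \<longlonglongrightarrow> G x" for x
        using LIMSEQ_ignore_initial_segment[OF conv[of x], of N] by simp
    qed
    have "(\<lambda>n. integral {s1..u} (Gn (n + N))) = (\<lambda>n. z (n + N) u - z (n + N) s1)"
      using hi by (intro ext integral_unique)
    moreover have "(\<lambda>n. z (n + N) u - z (n + N) s1) \<longlonglongrightarrow> w u - w s1"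
    proof -
      have "(\<lambda>n. Gn n u) \<longlonglongrightarrow> G u" by (rule conv)
      have l: "(\<lambda>n. z n x) \<longlonglongrightarrow> w x" for x
      proof (rule LIMSEQ_I)
        fix e :: real assume "e > 0"
        then obtain N where "\<forall>n\<ge>N. \<forall>t\<in>{x..x}. \<bar>z n t - w t\<bar> < e" using unif by blast
        then show "\<exists>N. \<forall>n\<ge>N. norm (z n x - w x) < e" by auto
      qed
      have l1: "(\<lambda>n. z (n + N) u) \<longlonglongrightarrow> w u"
        using LIMSEQ_ignore_initial_segment[OF l[of u], of N] by simp
      have l2: "(\<lambda>n. z (n + N) s1) \<longlonglongrightarrow> w s1"
        using LIMSEQ_ignore_initial_segment[OF l[of s1], of N] by simp
      show ?thesis by (rule tendsto_diff[OF l1 l2])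
    qed
    ultimately have "(\<lambda>n. integral {s1..u} (Gn (n + N))) \<longlonglongrightarrow> w u - w s1" by simp
    then show ?thesis using dc by (rule LIMSEQ_unique)
  qed
  have t0in: "t0 \<in> {s1..b1}" using sb by simp
  have cG: "continuous_on {s1..b1} G" by (rule contG)
  have "((\<lambda>u. integral {s1..u} G) has_vector_derivative G t0) (at t0 within {s1..b1})"
    by (rule integral_has_vector_derivative[OF cG t0in])
  moreover have "at t0 within {s1..b1} = at t0"
    by (rule at_within_interior) (use sb in simp)
  ultimately have "((\<lambda>u. integral {s1..u} G) has_vector_derivative G t0) (at t0)" by simp
  then have "((\<lambda>u. integral {s1..u} G) has_real_derivative G t0) (at t0)"
    by (simp only: has_real_derivative_iff_has_vector_derivative)
  then have "((\<lambda>u. w s1 + integral {s1..u} G) has_real_derivative G t0) (at t0)"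
    by (auto intro!: derivative_eq_intros)
  then have "(w has_real_derivative G t0) (at t0)"
  proof (rule has_field_derivative_transform_within_open)
    show "open {s1<..<b1}" by simp
    show "t0 \<in> {s1<..<b1}" using sb by simp
    fix x assume "x \<in> {s1<..<b1}"
    then show "w s1 + integral {s1..x} G = w x" using ident[of x] by auto
  qed
  then show ?thesis by (simp add: G_def)
qed



lemma limit_props:
  fixes z :: "nat \<Rightarrow> real \<Rightarrow> real"
  assumes bnd: "\<And>n t. 0 \<le> z n t \<and> z n t \<le> M"
    and lip: "\<And>n s t. \<bar>z n s - z n t\<bar> \<le> L * \<bar>s - t\<bar>"
    and lim: "\<And>t. (\<lambda>n. z n t) \<longlonglongrightarrow> w t"
  shows "\<And>t. 0 \<le> w t \<and> w t \<le> M" "\<And>s t. \<bar>w s - w t\<bar> \<le> L * \<bar>s - t\<bar>"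
proof -
  fix t
  have "0 \<le> w t" by (rule LIMSEQ_le_const[OF lim]) (use bnd in blast)
  moreover have "w t \<le> M" by (rule LIMSEQ_le_const2[OF lim]) (use bnd in blast)
  ultimately show "0 \<le> w t \<and> w t \<le> M" by blast
next
  fix s t
  have "(\<lambda>n. \<bar>z n s - z n t\<bar>) \<longlonglongrightarrow> \<bar>w s - w t\<bar>"
    by (intro tendsto_intros lim)
  then show "\<bar>w s - w t\<bar> \<le> L * \<bar>s - t\<bar>"
    by (rule LIMSEQ_le_const2) (use lip in blast)
qed

lemma zero_gsol:
  assumes f0: "f (seg h (\<lambda>_. 0) 0) = 0"
  shows "gsol h f (\<lambda>_. 0)"
proof -
  have z: "seg h (\<lambda>_::real. 0::real) t = (\<lambda>_. 0)" for t by (rule HOL.ext) (simp add: seg_def)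
  have fz: "f (\<lambda>_. 0) = 0" using f0 z[of 0] by simp
  show ?thesis unfolding gsol_def
  proof (intro conjI ballI)
    show "continuous_on {-h..} (\<lambda>_::real. 0::real)" by simp
    show "0 \<le> (0::real)" for s :: real by simp
    fix t :: real
    have "((\<lambda>_. 0::real) has_real_derivative 0) (at t)" by simp
    then show "((\<lambda>_. 0) has_real_derivative (- 0 + f (seg h (\<lambda>_. 0) t))) (at t)"
      by (simp add: z fz)
  qed
qed

lemma extE:
  assumes ext: "\<forall>T\<ge>0. \<forall>x. sol_on h f T x \<longrightarrow>
                (\<exists>y. gsol h f y \<and> (\<forall>s\<in>{-h..T}. y s = x s)) \<and>
                (\<forall>y z. gsol h f y \<and> (\<forall>s\<in>{-h..T}. y s = x s) \<and>
                       gsol h f z \<and> (\<forall>s\<in>{-h..T}. z s = x s) \<longrightarrow> (\<forall>s\<in>{-h..}. y s = z s))"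
    and "T \<ge> 0" "sol_on h f T x"
  shows "\<exists>y. gsol h f y \<and> (\<forall>s\<in>{-h..T}. y s = x s)"
  using ext[rule_format, OF assms(2) assms(3)] by (rule conjunct1)

lemma extU:
  assumes ext: "\<forall>T\<ge>0. \<forall>x. sol_on h f T x \<longrightarrow>
                (\<exists>y. gsol h f y \<and> (\<forall>s\<in>{-h..T}. y s = x s)) \<and>
                (\<forall>y z. gsol h f y \<and> (\<forall>s\<in>{-h..T}. y s = x s) \<and>
                       gsol h f z \<and> (\<forall>s\<in>{-h..T}. z s = x s) \<longrightarrow> (\<forall>s\<in>{-h..}. y s = z s))"
    and "T \<ge> 0" "sol_on h f T x" "gsol h f y" "\<forall>s\<in>{-h..T}. y s = x s"
      "gsol h f z" "\<forall>s\<in>{-h..T}. z s = x s"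
  shows "\<forall>s\<in>{-h..}. y s = z s"
proof -
  have "\<forall>y z. gsol h f y \<and> (\<forall>s\<in>{-h..T}. y s = x s) \<and>
                       gsol h f z \<and> (\<forall>s\<in>{-h..T}. z s = x s) \<longrightarrow> (\<forall>s\<in>{-h..}. y s = z s)"
    using ext[rule_format, OF assms(2) assms(3)] by (rule conjunct2)
  then show ?thesis using assms(4-7) by blast
qed

lemma uniq_contra:
  assumes ext: "\<forall>T\<ge>0. \<forall>x. sol_on h f T x \<longrightarrow>
                (\<exists>y. gsol h f y \<and> (\<forall>s\<in>{-h..T}. y s = x s)) \<and>
                (\<forall>y z. gsol h f y \<and> (\<forall>s\<in>{-h..T}. y s = x s) \<and>
                       gsol h f z \<and> (\<forall>s\<in>{-h..T}. z s = x s) \<longrightarrow> (\<forall>s\<in>{-h..}. y s = z s))"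
    and f0: "f (seg h (\<lambda>_. 0) 0) = 0"
    and hpos: "h > 0"
    and cb: "c < b" and cont: "continuous_on {c-h..b} w" and nn: "\<forall>s\<in>{c-h..b}. 0 \<le> w s"
    and zero: "\<forall>s\<in>{c-h..c}. w s = 0"
    and der: "\<forall>t\<in>{c<..<b}. (w has_real_derivative (- w t + f (seg h w t))) (at t)"
    and nz: "w b \<noteq> 0"
  shows False
proof -
  define x where "x s = w (s + c)" for s
  define T where "T = b - c"
  have T: "T > 0" using cb by (simp add: T_def)
  have contx: "continuous_on {-h..T} x"
    unfolding x_def
  proof (rule continuous_on_compose2[OF cont])
    show "continuous_on {-h..T} (\<lambda>s. s + c)" by (intro continuous_intros)
    show "(\<lambda>s. s + c) ` {-h..T} \<subseteq> {c-h..b}" by (auto simp: T_def)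
  qed
  have nnx: "\<forall>s\<in>{-h..T}. 0 \<le> x s" using nn by (auto simp: x_def T_def)
  have segx: "seg h x t = seg h w (t + c)" for t
    by (rule HOL.ext) (simp add: seg_def x_def ac_simps)
  have "sol_on h f T x"
    unfolding sol_on_def
  proof (intro conjI contx nnx ballI)
    fix t assume t: "t \<in> {0<..<T}"
    then have "t + c \<in> {c<..<b}" by (auto simp: T_def)
    then have "(w has_real_derivative (- w (t + c) + f (seg h w (t + c)))) (at (t + c))" using der by blast
    then have "((\<lambda>s. w (s + c)) has_real_derivative (- w (t + c) + f (seg h w (t + c)))) (at t)"
      by (simp add: DERIV_shift)
    moreover have xfun: "x = (\<lambda>s. w (s + c))" by (rule HOL.ext) (simp add: x_def)
    ultimately show "(x has_real_derivative (- x t + f (seg h x t))) (at t)"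
      unfolding segx by (simp add: x_def)
  qed
  then obtain y where y: "gsol h f y" "\<forall>s\<in>{-h..T}. y s = x s"
    using extE[OF ext, of T x] T by auto
  have "sol_on h f 0 x"
    unfolding sol_on_def
  proof (intro conjI)
    show "continuous_on {-h..0} x" by (rule continuous_on_subset[OF contx]) (use T in auto)
    show "\<forall>s\<in>{-h..0}. 0 \<le> x s" using nnx T by auto
  qed auto
  note sol0 = this
  have x0: "\<forall>s\<in>{-h..0}. (0::real) = x s" using zero by (auto simp: x_def)
  have "\<forall>s\<in>{-h..0}. y s = x s" using y(2) T by auto
  then have "\<forall>s\<in>{-h..}. y s = 0"
    using extU[OF ext _ sol0 y(1) _ zero_gsol[of f h, OF f0]] x0 by simp
  then have "y T = 0" using T hpos by auto
  moreover have "y T = w b" using y(2) T hpos by (auto simp: x_def T_def)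
  ultimately show False using nz by simp
qed

lemma first_hit:
  fixes g :: "real \<Rightarrow> real"
  assumes cont: "continuous_on {0..} g" and g0: "g 0 < d" and ex: "\<exists>t\<ge>0. g t \<ge> d"
  shows "\<exists>\<tau>>0. g \<tau> = d \<and> (\<forall>t\<in>{0..<\<tau>}. g t < d)"
proof -
  define S where "S = {0..} \<inter> g -` {d..}"
  have cS: "closed S" unfolding S_def by (rule continuous_closed_preimage[OF cont]) auto
  have neS: "S \<noteq> {}" using ex by (auto simp: S_def)
  have bS: "bdd_below S" unfolding S_def by (rule bdd_belowI[of _ 0]) auto
  define \<tau> where "\<tau> = Inf S"
  have tS: "\<tau> \<in> S" unfolding \<tau>_def by (rule closed_contains_Inf[OF neS bS cS])
  have lt: "g t < d" if "t \<in> {0..<\<tau>}" for t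
  proof (rule ccontr)
    assume "\<not> g t < d"
    then have "t \<in> S" using that by (auto simp: S_def)
    then have "\<tau> \<le> t" unfolding \<tau>_def by (rule cInf_lower[OF _ bS])
    then show False using that by auto
  qed
  have tpos: "\<tau> > 0"
  proof -
    have "\<tau> \<ge> 0" "g \<tau> \<ge> d" using tS by (auto simp: S_def)
    then show ?thesis using g0 by (cases "\<tau> = 0") auto
  qed
  have "g \<tau> \<le> d"
  proof -
    define R where "R = {0..\<tau>} \<inter> g -` {..d}"
    have "continuous_on {0..\<tau>} g" by (rule continuous_on_subset[OF cont]) auto
    then have cR: "closed R" unfolding R_def by (rule continuous_closed_preimage) auto
    have "{0..<\<tau>} \<subseteq> R" using lt by (auto simp: R_def less_imp_le)
    then have "closure {0..<\<tau>} \<subseteq> R" using cR by (rule closure_minimal)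
    then have "\<tau> \<in> R" using tpos by auto
    then show ?thesis by (auto simp: R_def)
  qed
  then have "g \<tau> = d" using tS by (auto simp: S_def)
  then show ?thesis using tpos lt by blast
qed



lemma construct:
  fixes h K \<delta> :: real and f :: "(real \<Rightarrow> real) \<Rightarrow> real"
  assumes hpos: "h > 0"
    and fcont: "fcont h f"
    and fbdd: "maps_cb_to_bounded h f"
    and ext: "\<forall>T\<ge>0. \<forall>x. sol_on h f T x \<longrightarrow>
                (\<exists>y. gsol h f y \<and> (\<forall>s\<in>{-h..T}. y s = x s)) \<and>
                (\<forall>y z. gsol h f y \<and> (\<forall>s\<in>{-h..T}. y s = x s) \<and>
                       gsol h f z \<and> (\<forall>s\<in>{-h..T}. z s = x s) \<longrightarrow> (\<forall>s\<in>{-h..}. y s = z s))"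
    and f0: "f (seg h (\<lambda>_. 0) 0) = 0"
    and attr: "\<forall>x. gsol h f x \<and> (\<exists>s\<in>{-h..0}. x s \<noteq> 0) \<longrightarrow> (x \<longlongrightarrow> K) at_top"
    and dpos: "0 < \<delta>" and dK: "\<delta> < K"
  shows "\<exists>w L. (\<forall>t. 0 \<le> w t \<and> w t \<le> \<delta>) \<and> w 0 = \<delta> \<and> (\<forall>s t. \<bar>w s - w t\<bar> \<le> L * \<bar>s - t\<bar>)
      \<and> (\<forall>t<0. (w has_real_derivative (- w t + f (seg h w t))) (at t))"
proof -
  obtain F where FB: "\<forall>\<phi>\<in>Cplus h. supn h \<phi> \<le> \<delta> \<longrightarrow> \<bar>f \<phi>\<bar> \<le> F"
    using fbound[OF hpos fbdd] by blast
  define L where "L = \<delta> + \<bar>F\<bar>"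
  have L0: "L \<ge> 0" using dpos by (simp add: L_def)
  define \<epsilon> where "\<epsilon> n = \<delta> / (2 + real n)" for n :: nat
  have eps: "0 < \<epsilon> n" "\<epsilon> n < \<delta>" for n
  proof -
    show "0 < \<epsilon> n" using dpos by (simp add: \<epsilon>_def)
    have "\<delta> / (2 + real n) < \<delta> / 1" by (rule divide_strict_left_mono) (use dpos in auto)
    then show "\<epsilon> n < \<delta>" by (simp add: \<epsilon>_def)
  qed
  have epslim: "\<epsilon> \<longlonglongrightarrow> 0"
    unfolding \<epsilon>_def
    by (intro tendsto_divide_0[OF tendsto_const] filterlim_at_top_imp_at_infinity
        filterlim_tendsto_add_at_top[OF tendsto_const filterlim_real_sequentially])
  have "\<forall>n. \<exists>X. gsol h f X \<and> (\<forall>s\<in>{-h..0}. X s = \<epsilon> n)"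
  proof
    fix n
    have "sol_on h f 0 (\<lambda>_. \<epsilon> n)" unfolding sol_on_def using eps[of n] by auto
    from extE[OF ext _ this] show "\<exists>X. gsol h f X \<and> (\<forall>s\<in>{-h..0}. X s = \<epsilon> n)" by simp
  qed
  then obtain X where X1: "\<And>n. gsol h f (X n)" and X2: "\<And>n s. s \<in> {-h..0} \<Longrightarrow> X n s = \<epsilon> n"
    by metis
  have Xc: "continuous_on {-h..} (X n)" for n using X1[of n] by (simp add: gsol_def)
  have Xnn: "0 \<le> X n s" if "s \<ge> -h" for n s using X1[of n] that by (simp add: gsol_def)
  have Xd: "(X n has_real_derivative (- X n t + f (seg h (X n) t))) (at t)" if "t > 0" for n t
    using X1[of n] that by (simp add: gsol_def)
  have "\<exists>\<tau>>0. X n \<tau> = \<delta> \<and> (\<forall>t\<in>{0..<\<tau>}. X n t < \<delta>)" for n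
  proof (rule first_hit)
    show "continuous_on {0..} (X n)" by (rule continuous_on_subset[OF Xc]) (use hpos in auto)
    show "X n 0 < \<delta>" using X2[of 0 n] eps[of n] hpos by simp
    have "\<exists>s\<in>{-h..0}. X n s \<noteq> 0" using X2[of 0 n] eps[of n] hpos by (intro bexI[of _ 0]) auto
    then have "(X n \<longlongrightarrow> K) at_top" using attr X1[of n] by blast
    then have "eventually (\<lambda>t. \<delta> < X n t) at_top" using dK by (rule order_tendstoD)
    then obtain N where "\<forall>t\<ge>N. \<delta> < X n t" by (auto simp: eventually_at_top_linorder)
    then have "\<delta> < X n (max N 0)" by simp
    then show "\<exists>t\<ge>0. \<delta> \<le> X n t" by (intro exI[of _ "max N 0"]) auto
  qed
  then obtain \<tau> where \<tau>1: "\<And>n. \<tau> n > 0" and \<tau>2: "\<And>n. X n (\<tau> n) = \<delta>"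
    and \<tau>3: "\<And>n t. t \<in> {0..<\<tau> n} \<Longrightarrow> X n t < \<delta>"
    by metis
  have Xb: "0 \<le> X n t \<and> X n t \<le> \<delta>" if "t \<in> {-h..\<tau> n}" for n t
  proof -
    have "X n t \<le> \<delta>"
    proof (cases "t < 0")
      case True then show ?thesis using X2[of t n] eps[of n] that by auto
    next
      case False
      show ?thesis
      proof (cases "t = \<tau> n")
        case True then show ?thesis using \<tau>2 by simp
      next
        case False then show ?thesis using \<tau>3[of t n] \<open>\<not> t < 0\<close> that by force
      qed
    qed
    then show ?thesis using Xnn[of t n] that by auto
  qed
  have Xlip0: "\<bar>X n p - X n q\<bar> \<le> L * \<bar>p - q\<bar>" if pq: "p \<in> {0..\<tau> n}" "q \<in> {0..\<tau> n}" for n p q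
  proof (rule lip_mvt[where D = "\<lambda>t. - X n t + f (seg h (X n) t)"])
    show "continuous_on {0..\<tau> n} (X n)" by (rule continuous_on_subset[OF Xc]) (use hpos in auto)
    show "(X n has_real_derivative (- X n t + f (seg h (X n) t))) (at t)" if "0 < t" "t < \<tau> n" for t
      using Xd that by blast
    show "\<bar>- X n t + f (seg h (X n) t)\<bar> \<le> L" if t: "0 < t" "t < \<tau> n" for t
    proof -
      have "seg h (X n) t \<in> Cplus h"
      proof (rule seg_Cplus)
        show "continuous_on {t - h..t} (X n)" by (rule continuous_on_subset[OF Xc]) (use t in auto)
        show "0 \<le> X n s" if "s \<in> {t - h..t}" for s using Xnn that t by auto
      qed
      moreover have "supn h (seg h (X n) t) \<le> \<delta>"
      proof (rule supn_le[OF hpos])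
        fix s assume s: "s \<in> {-h..0}"
        then have "t + s \<in> {-h..\<tau> n}" using t by auto
        then show "\<bar>seg h (X n) t s\<bar> \<le> \<delta>" using Xb[of "t + s" n] s by (simp add: seg_def)
      qed
      ultimately have "\<bar>f (seg h (X n) t)\<bar> \<le> F" using FB by blast
      moreover have "0 \<le> X n t \<and> X n t \<le> \<delta>" using Xb[of t n] t hpos by auto
      then have "\<bar>X n t\<bar> \<le> \<delta>" by auto
      ultimately show ?thesis unfolding L_def by linarith
    qed
  qed (use pq in auto)
  have Xlip: "\<bar>X n p - X n q\<bar> \<le> L * \<bar>p - q\<bar>" if pq: "p \<in> {-h..\<tau> n}" "q \<in> {-h..\<tau> n}" for n p q
  proof -
    have m: "X n u = X n (max 0 u)" if "u \<in> {-h..\<tau> n}" for u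
    proof (cases "u < 0")
      case True
      then have "X n u = \<epsilon> n" using X2 that by auto
      moreover have "X n 0 = \<epsilon> n" using X2 hpos by auto
      ultimately show ?thesis using True by simp
    qed simp
    have "\<bar>X n (max 0 p) - X n (max 0 q)\<bar> \<le> L * \<bar>max 0 p - max 0 q\<bar>"
      by (rule Xlip0) (use pq \<tau>1[of n] in auto)
    also have "\<dots> \<le> L * \<bar>p - q\<bar>" by (rule mult_left_mono[OF _ L0]) (auto simp: max_def)
    finally show ?thesis using m[OF pq(1)] m[OF pq(2)] by simp
  qed
  define cl where "cl n t = max (-h) (min (t + \<tau> n) (\<tau> n))" for n t
  have clin: "cl n t \<in> {-h..\<tau> n}" for n t using \<tau>1[of n] hpos by (auto simp: cl_def)
  have cllip: "\<bar>cl n s - cl n t\<bar> \<le> \<bar>s - t\<bar>" for n s t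
    unfolding cl_def by (auto simp: max_def min_def)
  define z where "z n t = X n (cl n t)" for n t
  have zb: "\<And>n t. 0 \<le> z n t \<and> z n t \<le> \<delta>" unfolding z_def using Xb clin by blast
  have zl: "\<And>n s t. \<bar>z n s - z n t\<bar> \<le> L * \<bar>s - t\<bar>"
  proof -
    fix n s t
    have "\<bar>z n s - z n t\<bar> \<le> L * \<bar>cl n s - cl n t\<bar>" unfolding z_def by (rule Xlip[OF clin clin])
    also have "\<dots> \<le> L * \<bar>s - t\<bar>" by (rule mult_left_mono[OF cllip L0])
    finally show "\<bar>z n s - z n t\<bar> \<le> L * \<bar>s - t\<bar>" .
  qed
  have z0: "z n 0 = \<delta>" for n
  proof -
    have "cl n 0 = \<tau> n" using \<tau>1[of n] hpos by (simp add: cl_def)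
    then show ?thesis by (simp add: z_def \<tau>2)
  qed
  have zeps: "z n t = \<epsilon> n" if "t \<le> - \<tau> n" for n t
  proof -
    have "cl n t \<in> {-h..0}" using that hpos by (auto simp: cl_def)
    then show ?thesis by (simp add: z_def X2)
  qed
  have zd: "(z n has_real_derivative (- z n t + f (seg h (z n) t))) (at t)" if t: "t \<in> {- \<tau> n<..<0}" for n t
  proof -
    have eqU: "z n u = X n (u + \<tau> n)" if "u \<in> {- \<tau> n - h<..<0}" for u
    proof -
      have "cl n u = u + \<tau> n" using that by (auto simp: cl_def)
      then show ?thesis by (simp add: z_def)
    qed
    have "(X n has_real_derivative (- X n (t + \<tau> n) + f (seg h (X n) (t + \<tau> n)))) (at (t + \<tau> n))"
      by (rule Xd) (use t in auto)
    then have "((\<lambda>u. X n (u + \<tau> n)) has_real_derivative (- X n (t + \<tau> n) + f (seg h (X n) (t + \<tau> n)))) (at t)"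
      by (simp add: DERIV_shift)
    then have d: "(z n has_real_derivative (- X n (t + \<tau> n) + f (seg h (X n) (t + \<tau> n)))) (at t)"
    proof (rule has_field_derivative_transform_within_open)
      show "open {- \<tau> n - h<..<0}" by simp
      show "t \<in> {- \<tau> n - h<..<0}" using t hpos by auto
      show "X n (u + \<tau> n) = z n u" if "u \<in> {- \<tau> n - h<..<0}" for u using eqU[OF that] by simp
    qed
    have "seg h (z n) t = seg h (X n) (t + \<tau> n)"
    proof (rule HOL.ext)
      fix s
      show "seg h (z n) t s = seg h (X n) (t + \<tau> n) s"
      proof (cases "s \<in> {-h..0}")
        case True
        then have "t + s \<in> {- \<tau> n - h<..<0}" using t by auto
        then show ?thesis using True eqU by (simp add: seg_def ac_simps)
      next
        case False
        then show ?thesis unfolding seg_def by (simp only: if_False)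
      qed
    qed
    moreover have "z n t = X n (t + \<tau> n)" using eqU t hpos by auto
    ultimately show ?thesis using d by simp
  qed
  have tinf: "\<forall>B. \<exists>N. \<forall>n\<ge>N. B < \<tau> n"
  proof (rule ccontr)
    assume "\<not> (\<forall>B. \<exists>N. \<forall>n\<ge>N. B < \<tau> n)"
    then have "\<exists>B. \<forall>N. \<exists>n\<ge>N. \<tau> n \<le> B" by (simp add: not_less)
    then obtain B where B: "\<forall>N. \<exists>n\<ge>N. \<tau> n \<le> B" by blast
    then have "infinite {n. \<tau> n \<le> B}" by (simp add: infinite_nat_iff_unbounded_le)
    then have "\<exists>q::nat\<Rightarrow>nat. strict_mono q \<and> (\<forall>n. q n \<in> {n. \<tau> n \<le> B})"
      by (rule infinite_enumerate)
    then obtain q :: "nat \<Rightarrow> nat" where q: "strict_mono q" "\<forall>n. q n \<in> {n. \<tau> n \<le> B}"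
      by blast
    have sc: "seq_compact {0..B}" by (rule compact_imp_seq_compact) simp
    have "\<forall>n. (\<tau> \<circ> q) n \<in> {0..B}" using q \<tau>1 by (auto simp: less_imp_le)
    then obtain l q2 where l: "l \<in> {0..B}" "strict_mono q2" "((\<tau> \<circ> q) \<circ> q2) \<longlonglongrightarrow> l"
      by (rule seq_compactE[OF sc])
    define z' where "z' n = z (q (q2 n))" for n
    have zb': "\<And>n t. 0 \<le> z' n t \<and> z' n t \<le> \<delta>" unfolding z'_def by (rule zb)
    have zl': "\<And>n s t. \<bar>z' n s - z' n t\<bar> \<le> L * \<bar>s - t\<bar>" unfolding z'_def by (rule zl)
    obtain r :: "nat \<Rightarrow> nat" and w where r1: "strict_mono r" and r2: "\<And>t. (\<lambda>n. z' (r n) t) \<longlonglongrightarrow> w t"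
      and r3: "\<And>a b e. e > 0 \<Longrightarrow> \<exists>N. \<forall>n\<ge>N. \<forall>t\<in>{a..b}. \<bar>z' (r n) t - w t\<bar> < e"
      by (rule lim_extract[of z' \<delta> L, OF zb' zl']) auto
    define \<sigma> where "\<sigma> n = q (q2 (r n))" for n
    have \<sigma>z: "z' (r n) = z (\<sigma> n)" for n by (simp add: z'_def \<sigma>_def)
    have \<sigma>eq: "\<sigma> = q \<circ> (q2 \<circ> r)" by (rule HOL.ext) (simp add: \<sigma>_def)
    have \<sigma>m: "strict_mono \<sigma>" unfolding \<sigma>eq by (intro strict_mono_o q(1) l(2) r1)
    have tl: "(\<lambda>n. \<tau> (\<sigma> n)) \<longlonglongrightarrow> l"
      using LIMSEQ_subseq_LIMSEQ[OF l(3) r1] by (simp add: o_def \<sigma>_def)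
    have zbr: "\<And>n t. 0 \<le> z' (r n) t \<and> z' (r n) t \<le> \<delta>" by (rule zb')
    have zlr: "\<And>n s t. \<bar>z' (r n) s - z' (r n) t\<bar> \<le> L * \<bar>s - t\<bar>" by (rule zl')
    note wp = limit_props[of "\<lambda>n. z' (r n)" \<delta> L w, OF zbr zlr r2]
    have w0: "w 0 = \<delta>"
    proof -
      have "(\<lambda>n. z' (r n) 0) \<longlonglongrightarrow> \<delta>" by (simp add: \<sigma>z z0)
      then show ?thesis using r2[of 0] LIMSEQ_unique by blast
    qed
    have wz: "w t = 0" if "t < -l" for t
    proof -
      have "eventually (\<lambda>n. \<tau> (\<sigma> n) < -t) sequentially"
        using tl that by (intro order_tendstoD(2)) auto
      then have ev: "eventually (\<lambda>n. \<epsilon> (\<sigma> n) = z' (r n) t) sequentially"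
        by eventually_elim (simp add: \<sigma>z zeps)
      have "(\<lambda>n. \<epsilon> (\<sigma> n)) \<longlonglongrightarrow> 0"
        using LIMSEQ_subseq_LIMSEQ[OF epslim \<sigma>m] by (simp add: o_def)
      then have "(\<lambda>n. z' (r n) t) \<longlonglongrightarrow> 0" using ev by (rule Lim_transform_eventually)
      then show ?thesis using r2[of t] LIMSEQ_unique by blast
    qed
    define c where "c = -l"
    have wc: "w c = 0"
    proof (rule ccontr)
      assume nz: "w c \<noteq> 0"
      define \<eta> where "\<eta> = \<bar>w c\<bar> / (2 * (L + 1))"
      have \<eta>: "\<eta> > 0" using nz L0 by (simp add: \<eta>_def)
      have "w (c - \<eta>) = 0" by (rule wz) (use \<eta> in \<open>simp add: c_def\<close>)
      then have "\<bar>w c\<bar> \<le> L * \<bar>c - (c - \<eta>)\<bar>" using wp(2)[of c "c - \<eta>"] by simp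
      also have "\<dots> = L * \<eta>" using \<eta> by simp
      also have "\<dots> = \<bar>w c\<bar> * (L / (2 * (L + 1)))" by (simp add: \<eta>_def)
      also have "\<dots> < \<bar>w c\<bar> * 1"
      proof (rule mult_strict_left_mono)
        show "L / (2 * (L + 1)) < 1" using L0 by (simp add: divide_less_eq)
        show "0 < \<bar>w c\<bar>" using nz by simp
      qed
      finally show False by simp
    qed
    have cneg: "c < 0"
    proof -
      have "l \<ge> 0" using l(1) by simp
      moreover have "c \<noteq> 0" using wc w0 dpos by auto
      ultimately show ?thesis by (simp add: c_def)
    qed
    have wd: "\<forall>t\<in>{c<..<0}. (w has_real_derivative (- w t + f (seg h w t))) (at t)"
    proof
      fix t assume t: "t \<in> {c<..<0}"
      define a' where "a' = (c + t) / 2"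
      have "-l < t" using t by (simp add: c_def)
      then have "-a' < l" unfolding a'_def c_def by (auto simp: field_simps)
      then have "eventually (\<lambda>n. -a' < \<tau> (\<sigma> n)) sequentially"
        using tl by (intro order_tendstoD(1))
      then obtain N where N: "\<forall>n\<ge>N. -a' < \<tau> (\<sigma> n)" by (auto simp: eventually_sequentially)
      have ev: "\<exists>N. \<forall>n\<ge>N. \<forall>t\<in>{a'<..<0}. ((\<lambda>n. z' (r n)) n has_real_derivative
                   (- (\<lambda>n. z' (r n)) n t + f (seg h ((\<lambda>n. z' (r n)) n) t))) (at t)"
      proof (intro exI[of _ N] allI impI ballI)
        fix n t' assume "n \<ge> N" "t' \<in> {a'<..<0}"
        then have "t' \<in> {- \<tau> (\<sigma> n)<..<0}" using N by auto
        then have "(z (\<sigma> n) has_real_derivative (- z (\<sigma> n) t' + f (seg h (z (\<sigma> n)) t'))) (at t')"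
          by (rule zd)
        then show "((\<lambda>n. z' (r n)) n has_real_derivative
                   (- (\<lambda>n. z' (r n)) n t' + f (seg h ((\<lambda>n. z' (r n)) n) t'))) (at t')"
          by (simp only: \<sigma>z)
      qed
      have tin: "t \<in> {a'<..<0}" using t by (auto simp: a'_def)
      show "(w has_real_derivative (- w t + f (seg h w t))) (at t)"
        using sol_limit[where z="\<lambda>n. z' (r n)", OF hpos fcont FB zbr zlr wp(1) wp(2) r3 ev tin] by simp
    qed
    show False
    proof (rule uniq_contra[OF ext f0 hpos, of c 0 w])
      show "c < 0" by (rule cneg)
      show "continuous_on {c - h..0} w" by (rule lip_cont[OF wp(2)])
      show "\<forall>s\<in>{c - h..0}. 0 \<le> w s" using wp(1) by blast
      show "\<forall>s\<in>{c - h..c}. w s = 0"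
      proof
        fix s assume "s \<in> {c - h..c}"
        then show "w s = 0" using wz[of s] wc by (cases "s = c") (auto simp: c_def)
      qed
      show "\<forall>t\<in>{c<..<0}. (w has_real_derivative (- w t + f (seg h w t))) (at t)" by (rule wd)
      show "w 0 \<noteq> 0" using w0 dpos by simp
    qed
  qed
  obtain r :: "nat \<Rightarrow> nat" and w where r1: "strict_mono r" and r2: "\<And>t. (\<lambda>n. z (r n) t) \<longlonglongrightarrow> w t"
    and r3: "\<And>a b e. e > 0 \<Longrightarrow> \<exists>N. \<forall>n\<ge>N. \<forall>t\<in>{a..b}. \<bar>z (r n) t - w t\<bar> < e"
    by (rule lim_extract[of z \<delta> L, OF zb zl]) auto
  have zbr: "\<And>n t. 0 \<le> z (r n) t \<and> z (r n) t \<le> \<delta>" by (rule zb)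
  have zlr: "\<And>n s t. \<bar>z (r n) s - z (r n) t\<bar> \<le> L * \<bar>s - t\<bar>" by (rule zl)
  note wp = limit_props[of "\<lambda>n. z (r n)" \<delta> L w, OF zbr zlr r2]
  have w0: "w 0 = \<delta>"
  proof -
    have "(\<lambda>n. z (r n) 0) \<longlonglongrightarrow> \<delta>" by (simp add: z0)
    then show ?thesis using r2[of 0] LIMSEQ_unique by blast
  qed
  have wd: "\<forall>t<0. (w has_real_derivative (- w t + f (seg h w t))) (at t)"
  proof (intro allI impI)
    fix t :: real assume t: "t < 0"
    obtain N where N: "\<forall>n\<ge>N. 1 - t < \<tau> n" using tinf by blast
    have ev: "\<exists>N. \<forall>n\<ge>N. \<forall>t\<in>{t-1<..<0}. ((\<lambda>n. z (r n)) n has_real_derivative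
                   (- (\<lambda>n. z (r n)) n t + f (seg h ((\<lambda>n. z (r n)) n) t))) (at t)"
    proof (intro exI[of _ N] allI impI ballI)
      fix n t' assume n: "n \<ge> N" and t': "t' \<in> {t-1<..<0}"
      have "r n \<ge> N" using n seq_suble[OF r1, of n] by simp
      then have "1 - t < \<tau> (r n)" using N by blast
      then have "t' \<in> {- \<tau> (r n)<..<0}" using t' by auto
      then show "((\<lambda>n. z (r n)) n has_real_derivative
                   (- (\<lambda>n. z (r n)) n t' + f (seg h ((\<lambda>n. z (r n)) n) t'))) (at t')"
        by (rule zd)
    qed
    have tin: "t \<in> {t-1<..<0}" using t by auto
    show "(w has_real_derivative (- w t + f (seg h w t))) (at t)"
      using sol_limit[where z="\<lambda>n. z (r n)", OF hpos fcont FB zbr zlr wp(1) wp(2) r3 ev tin] by simp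
  qed
  have A: "\<forall>t. 0 \<le> w t \<and> w t \<le> \<delta>" using wp(1) by blast
  have B: "\<forall>s t. \<bar>w s - w t\<bar> \<le> L * \<bar>s - t\<bar>" using wp(2) by blast
  show ?thesis using A B w0 wd by blast
qed



theorem theorem5:
  fixes h K :: real and f :: "(real \<Rightarrow> real) \<Rightarrow> real"
  assumes hpos: "h > 0"
    and fnonneg: "\<forall>\<phi>\<in>Cplus h. 0 \<le> f \<phi>"
    and fcont: "fcont h f"
    and fbdd: "maps_cb_to_bounded h f"
    and ext: "\<forall>T\<ge>0. \<forall>x. sol_on h f T x \<longrightarrow>
                (\<exists>y. gsol h f y \<and> (\<forall>s\<in>{-h..T}. y s = x s)) \<and>
                (\<forall>y z. gsol h f y \<and> (\<forall>s\<in>{-h..T}. y s = x s) \<and>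
                       gsol h f z \<and> (\<forall>s\<in>{-h..T}. z s = x s) \<longrightarrow> (\<forall>s\<in>{-h..}. y s = z s))"
    and f0: "f (seg h (\<lambda>_. 0) 0) = 0"
    and Kpos: "K > 0"
    and fK: "f (seg h (\<lambda>_. K) 0) = K"
    and attr: "\<forall>x. gsol h f x \<and> (\<exists>s\<in>{-h..0}. x s \<noteq> 0) \<longrightarrow> (x \<longlongrightarrow> K) at_top"
  shows "\<exists>\<psi> :: real \<Rightarrow> real. (\<forall>t. \<psi> t > 0)
           \<and> (\<forall>t. (\<psi> has_real_derivative (- \<psi> t + f (seg h \<psi> t))) (at t))
           \<and> (\<psi> \<longlongrightarrow> 0) at_bot \<and> (\<psi> \<longlongrightarrow> K) at_top"
proof -
  define \<delta> where "\<delta> = K / 2"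
  have dpos: "0 < \<delta>" and dK: "\<delta> < K" using Kpos by (auto simp: \<delta>_def)
  obtain w L where wb: "\<forall>t. 0 \<le> w t \<and> w t \<le> \<delta>" and w0: "w 0 = \<delta>"
    and wl: "\<forall>s t. \<bar>w s - w t\<bar> \<le> L * \<bar>s - t\<bar>"
    and wd: "\<forall>t<0. (w has_real_derivative (- w t + f (seg h w t))) (at t)"
    using construct[OF hpos fcont fbdd ext f0 attr dpos dK] by blast
  obtain F where FB: "\<forall>\<phi>\<in>Cplus h. supn h \<phi> \<le> \<delta> \<longrightarrow> \<bar>f \<phi>\<bar> \<le> F"
    using fbound[OF hpos fbdd] by blast
  have wl': "\<And>s t. \<bar>w s - w t\<bar> \<le> L * \<bar>s - t\<bar>" using wl by blast
  have wb': "\<And>t. 0 \<le> w t \<and> w t \<le> \<delta>" using wb by blast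
  have L0: "L \<ge> 0" using wl'[of 1 0] by simp
  have wc: "continuous_on A w" for A by (rule lip_cont[OF wl'])
  have wC: "seg h w t \<in> Cplus h" for t by (rule lip_segC[OF wl']) (use wb' in blast)
  have fnn: "0 \<le> f (seg h w t)" for t using fnonneg wC by blast
  have wlim: "(w \<longlongrightarrow> 0) at_bot"
  proof (rule order_tendstoI)
    fix a :: real assume "a < 0"
    then show "eventually (\<lambda>t. a < w t) at_bot"
      using wb' by (intro always_eventually) (auto intro: less_le_trans)
  next
    fix a :: real assume a: "0 < a"
    show "eventually (\<lambda>t. w t < a) at_bot"
    proof (rule ccontr)
      assume ne: "\<not> eventually (\<lambda>t. w t < a) at_bot"
      then have ne2: "\<forall>N. \<exists>t\<le>N. a \<le> w t" by (simp add: eventually_at_bot_linorder not_less)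
      have "\<forall>k::nat. \<exists>t. t \<le> - real k \<and> a \<le> w t"
      proof
        fix k :: nat
        from ne2 obtain t where "t \<le> - real k" "a \<le> w t" by blast
        then show "\<exists>t. t \<le> - real k \<and> a \<le> w t" by blast
      qed
      then obtain tk where tk1: "\<And>k. tk k \<le> - real k" and tk2: "\<And>k. a \<le> w (tk k)" by metis
      define \<zeta> where "\<zeta> k t = w (min (t + tk k) 0)" for k t
      have \<zeta>b: "\<And>k t. 0 \<le> \<zeta> k t \<and> \<zeta> k t \<le> \<delta>" unfolding \<zeta>_def by (rule wb')
      have \<zeta>l: "\<And>k s t. \<bar>\<zeta> k s - \<zeta> k t\<bar> \<le> L * \<bar>s - t\<bar>"
      proof -
        fix k s t
        have "\<bar>\<zeta> k s - \<zeta> k t\<bar> \<le> L * \<bar>min (s + tk k) 0 - min (t + tk k) 0\<bar>"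
          unfolding \<zeta>_def by (rule wl')
        also have "\<dots> \<le> L * \<bar>s - t\<bar>" by (rule mult_left_mono[OF _ L0]) (auto simp: min_def)
        finally show "\<bar>\<zeta> k s - \<zeta> k t\<bar> \<le> L * \<bar>s - t\<bar>" .
      qed
      obtain r :: "nat \<Rightarrow> nat" and v where r1: "strict_mono r" and r2: "\<And>t. (\<lambda>n. \<zeta> (r n) t) \<longlonglongrightarrow> v t"
        and r3: "\<And>a b e. e > 0 \<Longrightarrow> \<exists>N. \<forall>n\<ge>N. \<forall>t\<in>{a..b}. \<bar>\<zeta> (r n) t - v t\<bar> < e"
        by (rule lim_extract[of \<zeta> \<delta> L, OF \<zeta>b \<zeta>l]) auto
      have \<zeta>br: "\<And>n t. 0 \<le> \<zeta> (r n) t \<and> \<zeta> (r n) t \<le> \<delta>" by (rule \<zeta>b)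
      have \<zeta>lr: "\<And>n s t. \<bar>\<zeta> (r n) s - \<zeta> (r n) t\<bar> \<le> L * \<bar>s - t\<bar>" by (rule \<zeta>l)
      note vp = limit_props[of "\<lambda>n. \<zeta> (r n)" \<delta> L v, OF \<zeta>br \<zeta>lr r2]
      have v0: "a \<le> v 0"
      proof (rule LIMSEQ_le_const[OF r2[of 0]])
        have "a \<le> \<zeta> (r n) 0" for n
        proof -
          have "tk (r n) \<le> 0" using tk1[of "r n"] by simp
          then show ?thesis using tk2[of "r n"] by (simp add: \<zeta>_def min_def)
        qed
        then show "\<exists>N. \<forall>n\<ge>N. a \<le> \<zeta> (r n) 0" by blast
      qed
      have vd: "(v has_real_derivative (- v t + f (seg h v t))) (at t)" for t
      proof -
        obtain N :: nat where N: "t + 1 < real N" using reals_Archimedean2 by blast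
        have ev: "\<exists>N. \<forall>n\<ge>N. \<forall>t'\<in>{t-1<..<t+1}. ((\<lambda>n. \<zeta> (r n)) n has_real_derivative
                   (- (\<lambda>n. \<zeta> (r n)) n t' + f (seg h ((\<lambda>n. \<zeta> (r n)) n) t'))) (at t')"
        proof (intro exI[of _ N] allI impI ballI)
          fix n t' assume n: "n \<ge> N" and t': "t' \<in> {t-1<..<t+1}"
          define k where "k = r n"
          have "k \<ge> n" unfolding k_def by (rule seq_suble[OF r1])
          then have "real k \<ge> real N" using n by simp
          then have tkN: "tk k \<le> - real N" using tk1[of k] by linarith
          have eqU: "\<zeta> k u = w (u + tk k)" if "u \<in> {..< - tk k}" for u
            using that by (simp add: \<zeta>_def min_def)
          have tt: "t' + tk k < 0" using t' N tkN by auto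
          have "(w has_real_derivative (- w (t' + tk k) + f (seg h w (t' + tk k)))) (at (t' + tk k))"
            using wd tt by blast
          then have "((\<lambda>u. w (u + tk k)) has_real_derivative (- w (t' + tk k) + f (seg h w (t' + tk k)))) (at t')"
            by (simp add: DERIV_shift)
          then have d: "(\<zeta> k has_real_derivative (- w (t' + tk k) + f (seg h w (t' + tk k)))) (at t')"
          proof (rule has_field_derivative_transform_within_open)
            show "open {..< - tk k}" by simp
            show "t' \<in> {..< - tk k}" using tt by auto
            show "w (u + tk k) = \<zeta> k u" if "u \<in> {..< - tk k}" for u using eqU[OF that] by simp
          qed
          have "seg h (\<zeta> k) t' = seg h w (t' + tk k)"
          proof (rule HOL.ext)
            fix s
            show "seg h (\<zeta> k) t' s = seg h w (t' + tk k) s"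
            proof (cases "s \<in> {-h..0}")
              case True
              then have "t' + s \<in> {..< - tk k}" using tt by auto
              then show ?thesis using True eqU by (simp add: seg_def ac_simps)
            next
              case False
              then show ?thesis unfolding seg_def by (simp only: if_False)
            qed
          qed
          moreover have "\<zeta> k t' = w (t' + tk k)" using eqU tt by auto
          ultimately show "((\<lambda>n. \<zeta> (r n)) n has_real_derivative
                   (- (\<lambda>n. \<zeta> (r n)) n t' + f (seg h ((\<lambda>n. \<zeta> (r n)) n) t'))) (at t')"
            using d by (simp add: k_def)
        qed
        have tin: "t \<in> {t-1<..<t+1}" by simp
        show ?thesis
          using sol_limit[where z="\<lambda>n. \<zeta> (r n)", OF hpos fcont FB \<zeta>br \<zeta>lr vp(1) vp(2) r3 ev tin] by simp
      qed
      have "gsol h f v"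
        unfolding gsol_def
      proof (intro conjI ballI)
        show "continuous_on {-h..} v" by (rule lip_cont[OF vp(2)])
        show "0 \<le> v s" for s using vp(1) by blast
        show "(v has_real_derivative (- v t + f (seg h v t))) (at t)" for t by (rule vd)
      qed
      moreover have "\<exists>s\<in>{-h..0}. v s \<noteq> 0" using v0 a hpos by (intro bexI[of _ 0]) auto
      ultimately have "(v \<longlongrightarrow> K) at_top" using attr by blast
      moreover have "eventually (\<lambda>t. v t \<le> \<delta>) at_top" using vp(1) by (intro always_eventually) blast
      ultimately have "K \<le> \<delta>" by (rule tendsto_upperbound) simp
      then show False using dK by simp
    qed
  qed
  have wpos: "w t > 0" if t0: "t \<le> 0" for t
  proof (rule ccontr)
    assume "\<not> w t > 0"
    then have wt0: "w t = 0" using wb'[of t] by simp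
    have tneg: "t < 0" using wt0 w0 dpos t0 by (cases "t = 0") auto
    have zr: "w s = 0" if "s \<le> t" for s
    proof (rule ccontr)
      assume "w s \<noteq> 0"
      then have ws: "w s > 0" using wb'[of s] by simp
      have "w t > 0"
      proof (rule pos_forward[where g = w and g' = "\<lambda>u. - w u + f (seg h w u)"])
        show "s \<le> t" by fact
        show "continuous_on {s..t} w" by (rule wc)
        show "(w has_real_derivative (- w u + f (seg h w u))) (at u)" if "s < u" "u < t" for u
          using wd that tneg by auto
        show "- w u + f (seg h w u) \<ge> - w u" for u using fnn by simp
        show "w s > 0" by (rule ws)
      qed
      then show False using wt0 by simp
    qed
    show False
    proof (rule uniq_contra[OF ext f0 hpos, of t 0 w])
      show "t < 0" by (rule tneg)
      show "continuous_on {t - h..0} w" by (rule wc)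
      show "\<forall>s\<in>{t - h..0}. 0 \<le> w s" using wb' by blast
      show "\<forall>s\<in>{t - h..t}. w s = 0" using zr by auto
      show "\<forall>u\<in>{t<..<0}. (w has_real_derivative (- w u + f (seg h w u))) (at u)" using wd by auto
      show "w 0 \<noteq> 0" using w0 dpos by simp
    qed
  qed
  define x where "x s = w (s - 1)" for s
  have xl: "\<And>s t. \<bar>x s - x t\<bar> \<le> L * \<bar>s - t\<bar>"
  proof -
    fix s t
    have "\<bar>w (s - 1) - w (t - 1)\<bar> \<le> L * \<bar>(s - 1) - (t - 1)\<bar>" by (rule wl')
    then show "\<bar>x s - x t\<bar> \<le> L * \<bar>s - t\<bar>" by (simp add: x_def)
  qed
  have xfun: "x = (\<lambda>u. w (u + -1))" by (rule HOL.ext) (simp add: x_def)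
  have segx: "seg h x t = seg h w (t - 1)" for t
    by (rule HOL.ext) (simp add: seg_def x_def algebra_simps)
  have solx: "sol_on h f 1 x"
    unfolding sol_on_def
  proof (intro conjI ballI)
    show "continuous_on {-h..1} x" by (rule lip_cont[OF xl])
    show "0 \<le> x s" for s using wb' by (simp add: x_def)
    fix t :: real assume t: "t \<in> {0<..<1}"
    then have "(w has_real_derivative (- w (t + -1) + f (seg h w (t + -1)))) (at (t + -1))"
      using wd by auto
    then have "((\<lambda>u. w (u + -1)) has_real_derivative (- w (t + -1) + f (seg h w (t + -1)))) (at t)"
      by (simp only: DERIV_shift)
    then show "(x has_real_derivative (- x t + f (seg h x t))) (at t)"
      unfolding segx by (simp add: xfun)
  qed
  obtain y where y1: "gsol h f y" and y2: "\<forall>s\<in>{-h..1}. y s = x s"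
    using extE[OF ext _ solx] by auto
  have yc: "continuous_on {-h..} y" using y1 by (simp add: gsol_def)
  have ynn: "0 \<le> y s" if "s \<ge> -h" for s using y1 that by (simp add: gsol_def)
  have yd: "(y has_real_derivative (- y t + f (seg h y t))) (at t)" if "t > 0" for t
    using y1 that by (simp add: gsol_def)
  have fnny: "0 \<le> f (seg h y u)" if "u > 0" for u
  proof -
    have "seg h y u \<in> Cplus h"
    proof (rule seg_Cplus)
      show "continuous_on {u - h..u} y" by (rule continuous_on_subset[OF yc]) (use that in auto)
      show "0 \<le> y s" if "s \<in> {u - h..u}" for s using ynn that \<open>u > 0\<close> by auto
    qed
    then show ?thesis using fnonneg by blast
  qed
  define \<psi> where "\<psi> t = (if t \<le> -1 then w t else y (t + 1))" for t
  have \<psi>w: "\<psi> t = w t" if "t \<le> 0" for t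
  proof (cases "t \<le> -1")
    case False
    then have "t + 1 \<in> {-h..1}" using that hpos by auto
    then have "y (t + 1) = w t" using y2 by (simp add: x_def)
    then show ?thesis using False by (simp add: \<psi>_def)
  qed (simp add: \<psi>_def)
  have \<psi>y: "\<psi> t = y (t + 1)" if "t \<ge> -1 - h" for t
  proof (cases "t \<le> -1")
    case True
    then have "t + 1 \<in> {-h..1}" using that by auto
    then have "y (t + 1) = w t" using y2 by (simp add: x_def)
    then show ?thesis using True by (simp add: \<psi>_def)
  qed (simp add: \<psi>_def)
  have ypos: "y (t + 1) > 0" if "t > 0" for t
  proof (rule pos_forward[where g = y and g' = "\<lambda>u. - y u + f (seg h y u)"])
    show "1 \<le> t + 1" using that by simp
    show "continuous_on {1..t + 1} y" by (rule continuous_on_subset[OF yc]) (use hpos in auto)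
    show "(y has_real_derivative (- y u + f (seg h y u))) (at u)" if "1 < u" "u < t + 1" for u
      using yd that by auto
    show "- y u + f (seg h y u) \<ge> - y u" if "1 < u" "u < t + 1" for u using fnny that by simp
    have "y 1 = w 0" using y2 hpos by (simp add: x_def)
    then show "y 1 > 0" using w0 dpos by simp
  qed
  have pos: "\<psi> t > 0" for t
  proof (cases "t \<le> 0")
    case True then show ?thesis using \<psi>w wpos by simp
  next
    case False
    then have "\<psi> t = y (t + 1)" using hpos by (intro \<psi>y) auto
    then show ?thesis using ypos False by simp
  qed
  have der: "(\<psi> has_real_derivative (- \<psi> t + f (seg h \<psi> t))) (at t)" for t
  proof (cases "t < 0")
    case True
    have d: "(\<psi> has_real_derivative (- w t + f (seg h w t))) (at t)"
    proof (rule has_field_derivative_transform_within_open)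
      show "(w has_real_derivative (- w t + f (seg h w t))) (at t)" using wd True by blast
      show "open {..<(0::real)}" by simp
      show "t \<in> {..<0}" using True by simp
      show "w u = \<psi> u" if "u \<in> {..<0}" for u using \<psi>w that by simp
    qed
    have "seg h \<psi> t = seg h w t"
      by (rule HOL.ext) (use True in \<open>auto simp: seg_def \<psi>w\<close>)
    then show ?thesis using d \<psi>w True by simp
  next
    case False
    have "(y has_real_derivative (- y (t + 1) + f (seg h y (t + 1)))) (at (t + 1))"
      using yd False by simp
    then have "((\<lambda>u. y (u + 1)) has_real_derivative (- y (t + 1) + f (seg h y (t + 1)))) (at t)"
      by (simp only: DERIV_shift)
    then have d: "(\<psi> has_real_derivative (- y (t + 1) + f (seg h y (t + 1)))) (at t)"
    proof (rule has_field_derivative_transform_within_open)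
      show "open {-1 - h<..}" by simp
      show "t \<in> {-1 - h<..}" using False hpos by simp
      show "y (u + 1) = \<psi> u" if "u \<in> {-1 - h<..}" for u using \<psi>y that by simp
    qed
    have "seg h \<psi> t = seg h y (t + 1)"
    proof (rule HOL.ext)
      fix s
      show "seg h \<psi> t s = seg h y (t + 1) s"
      proof (cases "s \<in> {-h..0}")
        case True
        then have "t + s \<ge> -1 - h" using False by auto
        then show ?thesis using True \<psi>y by (simp add: seg_def ac_simps)
      next
        case False
        then show ?thesis unfolding seg_def by (simp only: if_False)
      qed
    qed
    moreover have "\<psi> t = y (t + 1)" using False hpos by (intro \<psi>y) auto
    ultimately show ?thesis using d by simp
  qed
  have lbot: "(\<psi> \<longlongrightarrow> 0) at_bot"
  proof (rule Lim_transform_eventually[OF wlim])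
    show "eventually (\<lambda>t. w t = \<psi> t) at_bot"
      unfolding eventually_at_bot_linorder by (intro exI[of _ 0]) (simp add: \<psi>w)
  qed
  have ytop: "(y \<longlongrightarrow> K) at_top"
  proof -
    have "y 0 = w (-1)" using y2 hpos by (simp add: x_def)
    then have "y 0 \<noteq> 0" using wpos[of "-1"] by simp
    then have "\<exists>s\<in>{-h..0}. y s \<noteq> 0" using hpos by (intro bexI[of _ 0]) auto
    then show ?thesis using attr y1 by blast
  qed
  have shift: "filterlim (\<lambda>t::real. t + 1) at_top at_top"
    unfolding filterlim_at_top
  proof
    fix Z :: real
    show "eventually (\<lambda>t. Z \<le> t + 1) at_top"
      unfolding eventually_at_top_linorder by (intro exI[of _ "Z - 1"]) auto
  qed
  have ltop: "(\<psi> \<longlongrightarrow> K) at_top"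
  proof (rule Lim_transform_eventually)
    show "((\<lambda>t. y (t + 1)) \<longlongrightarrow> K) at_top" by (rule filterlim_compose[OF ytop shift])
    show "eventually (\<lambda>t. y (t + 1) = \<psi> t) at_top"
      unfolding eventually_at_top_linorder
      by (intro exI[of _ 0]) (use \<psi>y hpos in auto)
  qed
  show ?thesis
    by (intro exI[of _ \<psi>] conjI allI pos der lbot ltop)
qed

end
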